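(* Let $p$ be a full-support skill distribution, and let $q_I,q_J$ be full-support perceptions. Let $\langle S_I,\pi_I\rangle$ and $\langle S_J,\pi_J\rangle$ be signal structures. Assume: - $\langle S_I,\pi_I\rangle$ is MLR; - $p\succsim_{LR}q_J$; - $q_I\succsim_{LR}q_J$; - $\langle S_I,\pi_I\rangle\succsim_G\langle S_J,\pi_J\rangle$. Then for every monotone firm $A\subset\mathcal{A}_M$, $$W_A(p,q_I,\langle S_I,\pi_I\rangle)\ \ge\ W_A(p,q_J,\langle S_J,\pi_J\rangle).$$
   Context: Let $\Theta\subset\mathbb{R}$ be a finite set of skill types with $|\Theta|\ge2$. Tasks are vectors $a\in\mathcal{A}:=\mathbb{R}^\Theta$. A firm is a non-empty finite set $A\subset\mathcal{A}$. It is monotone if $A\subset\mathcal{A}_M:=\{a: a(\theta')>a(\theta)\text{ whenever }\theta'>\theta\}$. A signal structure $\langle S,\pi\rangle$ consists of a non-empty finite set $S$ and a map $\pi:S\times\Theta\to[0,1]$ with $\sum_s\pi(s|\theta)=1$, such that each $s$ has $\pi(s|\theta)>0$ for some $\theta$. Pay: - $p,q\in\Delta(\Theta)$ have full support. - $q_{\langle S,\pi\rangle}(\theta|s):=q(\theta)\pi(s|\theta)/\sum_{\theta'}q(\theta')\pi(s|\theta')$. - $w_A(s,q,\langle S,\pi\rangle):=\max_{a\in A}\sum_\theta q_{\langle S,\pi\rangle}(\theta|s)a(\theta)$. - $W_A(p,q,\langle S,\pi\rangle):=\sum_\theta p(\theta)\sum_s\pi(s|\theta)w_A(s,q,\langle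 S,\pi\rangle)$. Orders: - $q'\succsim_{LR}q$ means $q(\theta)q'(\theta')\ge q(\theta')q'(\theta)$ whenever $\theta'>\theta$. - $\langle S',\pi'\rangle\succsim_G\langle S,\pi\rangle$ means there exists $g:S\times S'\to[0,1]$ with $\sum_s g(s|s')=1$ for each $s'$ and $\pi(s|\theta)=\sum_{s'}g(s|s')\pi'(s'|\theta)$ for all $s,\theta$. - $\langle S,\pi\rangle$ is MLR if $S\subset\mathbb{R}$ and $\pi(s|\theta)\pi(s'|\theta')\ge\pi(s|\theta')\pi(s'|\theta)$ whenever $s'>s$, $\theta'>\theta$. *)

theory Defs
  imports Complex_Main
begin

text \<open>Skill types: a finite set Theta of reals. Tasks are functions real => real
(only their values on Theta matter). Distributions are functions Theta -> real.\<close>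

definition full_support_dist :: "real set \<Rightarrow> (real \<Rightarrow> real) \<Rightarrow> bool" where
  "full_support_dist Theta p \<longleftrightarrow> (\<forall>\<theta>\<in>Theta. p \<theta> > 0) \<and> (\<Sum>\<theta>\<in>Theta. p \<theta>) = 1"

definition signal_structure :: "real set \<Rightarrow> 's set \<Rightarrow> ('s \<Rightarrow> real \<Rightarrow> real) \<Rightarrow> bool" where
  "signal_structure Theta S \<pi> \<longleftrightarrow>
     finite S \<and> S \<noteq> {} \<and>
     (\<forall>s\<in>S. \<forall>\<theta>\<in>Theta. 0 \<le> \<pi> s \<theta> \<and> \<pi> s \<theta> \<le> 1) \<and>
     (\<forall>\<theta>\<in>Theta. (\<Sum>s\<in>S. \<pi> s \<theta>) = 1) \<and>
     (\<forall>s\<in>S. \<exists>\<theta>\<in>Theta. \<pi> s \<theta> > 0)"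

definition monotone_firm :: "real set \<Rightarrow> (real \<Rightarrow> real) set \<Rightarrow> bool" where
  "monotone_firm Theta A \<longleftrightarrow> finite A \<and> A \<noteq> {} \<and>
     (\<forall>a\<in>A. \<forall>\<theta>\<in>Theta. \<forall>\<theta>'\<in>Theta. \<theta>' > \<theta> \<longrightarrow> a \<theta>' > a \<theta>)"

definition posterior :: "real set \<Rightarrow> (real \<Rightarrow> real) \<Rightarrow> ('s \<Rightarrow> real \<Rightarrow> real) \<Rightarrow> 's \<Rightarrow> real \<Rightarrow> real" where
  "posterior Theta q \<pi> s \<theta> = q \<theta> * \<pi> s \<theta> / (\<Sum>\<theta>'\<in>Theta. q \<theta>' * \<pi> s \<theta>')"

definition wage :: "real set \<Rightarrow> (real \<Rightarrow> real) set \<Rightarrow> 's \<Rightarrow> (real \<Rightarrow> real) \<Rightarrow> ('s \<Rightarrow> real \<Rightarrow> real) \<Rightarrow> real" where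
  "wage Theta A s q \<pi> = Max ((\<lambda>a. \<Sum>\<theta>\<in>Theta. posterior Theta q \<pi> s \<theta> * a \<theta>) ` A)"

definition total_wage :: "real set \<Rightarrow> (real \<Rightarrow> real) set \<Rightarrow> (real \<Rightarrow> real) \<Rightarrow> (real \<Rightarrow> real)
    \<Rightarrow> 's set \<Rightarrow> ('s \<Rightarrow> real \<Rightarrow> real) \<Rightarrow> real" where
  "total_wage Theta A p q S \<pi> = (\<Sum>\<theta>\<in>Theta. p \<theta> * (\<Sum>s\<in>S. \<pi> s \<theta> * wage Theta A s q \<pi>))"

text \<open>LR_ge Theta q' q means q' is LR-above q.\<close>
definition LR_ge :: "real set \<Rightarrow> (real \<Rightarrow> real) \<Rightarrow> (real \<Rightarrow> real) \<Rightarrow> bool" where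
  "LR_ge Theta q' q \<longleftrightarrow> (\<forall>\<theta>\<in>Theta. \<forall>\<theta>'\<in>Theta. \<theta>' > \<theta> \<longrightarrow> q \<theta> * q' \<theta>' \<ge> q \<theta>' * q' \<theta>)"

text \<open>Blackwell/garbling order: (S', pi') is more informative than (S, pi).\<close>
definition garbling_ge :: "real set \<Rightarrow> 't set \<Rightarrow> ('t \<Rightarrow> real \<Rightarrow> real) \<Rightarrow> 's set \<Rightarrow> ('s \<Rightarrow> real \<Rightarrow> real) \<Rightarrow> bool" where
  "garbling_ge Theta S' \<pi>' S \<pi> \<longleftrightarrow>
     (\<exists>g :: 's \<Rightarrow> 't \<Rightarrow> real.
        (\<forall>s\<in>S. \<forall>s'\<in>S'. 0 \<le> g s s' \<and> g s s' \<le> 1) \<and>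
        (\<forall>s'\<in>S'. (\<Sum>s\<in>S. g s s') = 1) \<and>
        (\<forall>s\<in>S. \<forall>\<theta>\<in>Theta. \<pi> s \<theta> = (\<Sum>s'\<in>S'. g s s' * \<pi>' s' \<theta>)))"

definition MLR :: "real set \<Rightarrow> real set \<Rightarrow> (real \<Rightarrow> real \<Rightarrow> real) \<Rightarrow> bool" where
  "MLR Theta S \<pi> \<longleftrightarrow> (\<forall>s\<in>S. \<forall>s'\<in>S. \<forall>\<theta>\<in>Theta. \<forall>\<theta>'\<in>Theta.
      s' > s \<and> \<theta>' > \<theta> \<longrightarrow> \<pi> s \<theta> * \<pi> s' \<theta>' \<ge> \<pi> s \<theta>' * \<pi> s' \<theta>)"

end

theory Submission
  imports Defs
begin

lemma cross_sum_nonneg: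
  fixes K :: "'a \<Rightarrow> 'a \<Rightarrow> real"
  assumes "finite T" "\<And>i j. i\<in>T \<Longrightarrow> j\<in>T \<Longrightarrow> K i j + K j i \<ge> 0"
  shows "(\<Sum>i\<in>T. \<Sum>j\<in>T. K i j) \<ge> 0"
proof -
  have "(\<Sum>i\<in>T. \<Sum>j\<in>T. K i j) = (\<Sum>i\<in>T. \<Sum>j\<in>T. K j i)" by (rule sum.swap)
  hence "2 * (\<Sum>i\<in>T. \<Sum>j\<in>T. K i j) = (\<Sum>i\<in>T. \<Sum>j\<in>T. K i j + K j i)" by (simp add: sum.distrib)
  also have "... \<ge> 0" using assms by (intro sum_nonneg) auto
  finally show ?thesis by simp
qed

lemma LR_expect:
  fixes u v f :: "real \<Rightarrow> real"
  assumes "finite T" "\<And>x y. x\<in>T \<Longrightarrow> y\<in>T \<Longrightarrow> x<y \<Longrightarrow> u x * v y \<ge> u y * v x"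
   "\<And>x y. x\<in>T \<Longrightarrow> y\<in>T \<Longrightarrow> x<y \<Longrightarrow> f x \<le> f y"
  shows "(\<Sum>x\<in>T. u x) * (\<Sum>x\<in>T. v x * f x) \<ge> (\<Sum>x\<in>T. v x) * (\<Sum>x\<in>T. u x * f x)"
proof -
  have "(\<Sum>x\<in>T. \<Sum>y\<in>T. u x * v y * (f y - f x)) \<ge> 0"
  proof (rule cross_sum_nonneg[OF assms(1)])
    fix x y assume xy: "x\<in>T" "y\<in>T"
    have "u x * v y * (f y - f x) + u y * v x * (f x - f y) = (u x * v y - u y * v x) * (f y - f x)" by algebra
    also have "... \<ge> 0"
    proof (cases x y rule: linorder_cases)
      case less then show ?thesis using assms(2,3) xy by (intro mult_nonneg_nonneg) auto
    next case equal then show ?thesis by simp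
    next case greater then show ?thesis using assms(2)[of y x] assms(3)[of y x] xy by (intro mult_nonpos_nonpos) auto
    qed
    finally show "u x * v y * (f y - f x) + u y * v x * (f x - f y) \<ge> 0" .
  qed
  moreover have "(\<Sum>x\<in>T. \<Sum>y\<in>T. u x * v y * (f y - f x)) = (\<Sum>x\<in>T. u x) * (\<Sum>x\<in>T. v x * f x) - (\<Sum>x\<in>T. v x) * (\<Sum>x\<in>T. u x * f x)"
  proof -
    have e1: "(\<Sum>x\<in>T. u x) * (\<Sum>x\<in>T. v x * f x) = (\<Sum>x\<in>T. \<Sum>y\<in>T. u x * (v y * f y))" by (rule sum_product)
    have e2: "(\<Sum>x\<in>T. u x * f x) * (\<Sum>x\<in>T. v x) = (\<Sum>x\<in>T. \<Sum>y\<in>T. u x * f x * v y)" by (rule sum_product)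
    have "(\<Sum>x\<in>T. \<Sum>y\<in>T. u x * v y * (f y - f x)) = (\<Sum>x\<in>T. \<Sum>y\<in>T. u x * (v y * f y) - u x * f x * v y)"
      by (rule sum.cong[OF refl])+ (simp add: algebra_simps)
    also have "... = (\<Sum>x\<in>T. \<Sum>y\<in>T. u x * (v y * f y)) - (\<Sum>x\<in>T. \<Sum>y\<in>T. u x * f x * v y)"
      by (simp add: sum_subtractf)
    finally show ?thesis using e1 e2 by (simp add: mult.commute)
  qed
  ultimately show ?thesis by simp
qed

lemma cheb:
  fixes b x y :: "real \<Rightarrow> real"
  assumes "finite T" "\<And>i. i\<in>T \<Longrightarrow> b i \<ge> 0"
   "\<And>i j. i\<in>T \<Longrightarrow> j\<in>T \<Longrightarrow> i<j \<Longrightarrow> x i \<le> x j"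
   "\<And>i j. i\<in>T \<Longrightarrow> j\<in>T \<Longrightarrow> i<j \<Longrightarrow> y i \<le> y j"
  shows "(\<Sum>i\<in>T. b i) * (\<Sum>i\<in>T. b i * x i * y i) \<ge> (\<Sum>i\<in>T. b i * x i) * (\<Sum>i\<in>T. b i * y i)"
proof -
  have "(\<Sum>i\<in>T. \<Sum>j\<in>T. b i * b j * x i * (y i - y j)) \<ge> 0"
  proof (rule cross_sum_nonneg[OF assms(1)])
    fix i j assume ij: "i\<in>T" "j\<in>T"
    have "b i * b j * x i * (y i - y j) + b j * b i * x j * (y j - y i) = (b i * b j) * ((x i - x j) * (y i - y j))" by algebra
    also have "... \<ge> 0"
    proof (rule mult_nonneg_nonneg)
      show "0 \<le> b i * b j" using assms(2) ij by simp
      show "0 \<le> (x i - x j) * (y i - y j)"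
      proof (cases i j rule: linorder_cases)
        case less then show ?thesis using assms(3,4) ij by (intro mult_nonpos_nonpos) auto
      next case equal then show ?thesis by simp
      next case greater then show ?thesis using assms(3)[of j i] assms(4)[of j i] ij by (intro mult_nonneg_nonneg) auto
      qed
    qed
    finally show "b i * b j * x i * (y i - y j) + b j * b i * x j * (y j - y i) \<ge> 0" .
  qed
  moreover have "(\<Sum>i\<in>T. \<Sum>j\<in>T. b i * b j * x i * (y i - y j)) = (\<Sum>i\<in>T. b i) * (\<Sum>i\<in>T. b i * x i * y i) - (\<Sum>i\<in>T. b i * x i) * (\<Sum>i\<in>T. b i * y i)"
  proof -
    have e1: "(\<Sum>i\<in>T. b i * x i * y i) * (\<Sum>i\<in>T. b i) = (\<Sum>i\<in>T. \<Sum>j\<in>T. b i * x i * y i * b j)" by (rule sum_product)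
    have e2: "(\<Sum>i\<in>T. b i * x i) * (\<Sum>i\<in>T. b i * y i) = (\<Sum>i\<in>T. \<Sum>j\<in>T. b i * x i * (b j * y j))" by (rule sum_product)
    have "(\<Sum>i\<in>T. \<Sum>j\<in>T. b i * b j * x i * (y i - y j)) = (\<Sum>i\<in>T. \<Sum>j\<in>T. b i * x i * y i * b j - b i * x i * (b j * y j))"
      by (rule sum.cong[OF refl])+ (simp add: algebra_simps)
    also have "... = (\<Sum>i\<in>T. \<Sum>j\<in>T. b i * x i * y i * b j) - (\<Sum>i\<in>T. \<Sum>j\<in>T. b i * x i * (b j * y j))"
      by (simp add: sum_subtractf)
    finally show ?thesis using e1 e2 by (simp add: mult.commute)
  qed
  ultimately show ?thesis by simp
qed

lemma wage_eq:
  "wage Theta A s q \<pi> = Max ((\<lambda>a. (\<Sum>\<theta>\<in>Theta. q \<theta> * \<pi> s \<theta> * a \<theta>) / (\<Sum>\<theta>\<in>Theta. q \<theta> * \<pi> s \<theta>)) ` A)"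
  unfolding wage_def posterior_def by (simp add: sum_divide_distrib)

lemma total_wage_eq:
  assumes "finite Theta" "finite S"
  shows "total_wage Theta A p q S \<pi> = (\<Sum>s\<in>S. (\<Sum>\<theta>\<in>Theta. p \<theta> * \<pi> s \<theta>) * wage Theta A s q \<pi>)"
proof -
  have "total_wage Theta A p q S \<pi> = (\<Sum>\<theta>\<in>Theta. \<Sum>s\<in>S. p \<theta> * \<pi> s \<theta> * wage Theta A s q \<pi>)"
    unfolding total_wage_def by (simp add: sum_distrib_left mult.assoc)
  also have "... = (\<Sum>s\<in>S. \<Sum>\<theta>\<in>Theta. p \<theta> * \<pi> s \<theta> * wage Theta A s q \<pi>)" by (rule sum.swap)
  also have "... = (\<Sum>s\<in>S. (\<Sum>\<theta>\<in>Theta. p \<theta> * \<pi> s \<theta>) * wage Theta A s q \<pi>)"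
    by (simp add: sum_distrib_right)
  finally show ?thesis .
qed

lemma denom_pos:
  assumes "finite Theta" "signal_structure Theta S \<pi>" "full_support_dist Theta q" "s \<in> S"
  shows "(\<Sum>\<theta>\<in>Theta. q \<theta> * \<pi> s \<theta>) > 0"
proof -
  obtain t where t: "t \<in> Theta" "\<pi> s t > 0" using assms(2,4) unfolding signal_structure_def by blast
  show ?thesis
  proof (rule sum_pos2[OF assms(1) t(1)])
    show "0 < q t * \<pi> s t" using t assms(3) unfolding full_support_dist_def by simp
    fix i assume "i \<in> Theta"
    thus "0 \<le> q i * \<pi> s i" using assms(2,3,4) unfolding full_support_dist_def signal_structure_def
      by (simp add: less_imp_le)
  qed
qed

lemma max_mono:
  fixes f g :: "'a \<Rightarrow> real"
  assumes "finite A" "A \<noteq> {}" "\<And>a. a \<in> A \<Longrightarrow> f a \<le> g a"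
  shows "Max (f ` A) \<le> Max (g ` A)"
proof -
  have "Max (f ` A) \<in> f ` A" using assms(1,2) by (intro Max_in) auto
  then obtain a where a: "a \<in> A" "Max (f ` A) = f a" by auto
  have "g a \<le> Max (g ` A)" using a(1) assms(1) by simp
  thus ?thesis using a assms(3)[OF a(1)] by simp
qed

lemma garb_sum:
  fixes h :: "real \<Rightarrow> real"
  assumes "finite Theta" "finite S'" "\<And>\<theta>. \<theta> \<in> Theta \<Longrightarrow> \<rho> \<theta> = (\<Sum>s'\<in>S'. g s' * \<pi> s' \<theta>)"
  shows "(\<Sum>\<theta>\<in>Theta. h \<theta> * \<rho> \<theta>) = (\<Sum>s'\<in>S'. g s' * (\<Sum>\<theta>\<in>Theta. h \<theta> * \<pi> s' \<theta>))"
proof -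
  have "(\<Sum>\<theta>\<in>Theta. h \<theta> * \<rho> \<theta>) = (\<Sum>\<theta>\<in>Theta. \<Sum>s'\<in>S'. g s' * (h \<theta> * \<pi> s' \<theta>))"
    using assms(3) by (simp add: sum_distrib_left mult_ac)
  also have "... = (\<Sum>s'\<in>S'. \<Sum>\<theta>\<in>Theta. g s' * (h \<theta> * \<pi> s' \<theta>))" by (rule sum.swap)
  also have "... = (\<Sum>s'\<in>S'. g s' * (\<Sum>\<theta>\<in>Theta. h \<theta> * \<pi> s' \<theta>))" by (simp add: sum_distrib_left)
  finally show ?thesis .
qed

theorem corollary2:
  fixes Theta :: "real set" and p qI qJ :: "real \<Rightarrow> real"
    and SI :: "real set" and piI :: "real \<Rightarrow> real \<Rightarrow> real"
    and SJ :: "'b set" and piJ :: "'b \<Rightarrow> real \<Rightarrow> real"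
    and A :: "(real \<Rightarrow> real) set"
  assumes "finite Theta" and "card Theta \<ge> 2"
    and "full_support_dist Theta p" and "full_support_dist Theta qI" and "full_support_dist Theta qJ"
    and "signal_structure Theta SI piI" and "signal_structure Theta SJ piJ"
    and "MLR Theta SI piI"
    and "LR_ge Theta p qJ"
    and "LR_ge Theta qI qJ"
    and "garbling_ge Theta SI piI SJ piJ"
    and "monotone_firm Theta A"
  shows "total_wage Theta A p qI SI piI \<ge> total_wage Theta A p qJ SJ piJ"
proof -
  have fin: "finite Theta" by fact
  have finI: "finite SI" and finJ: "finite SJ" using assms(6,7) unfolding signal_structure_def by auto
  have finA: "finite A" and neA: "A \<noteq> {}" and amono: "\<And>a x y. a \<in> A \<Longrightarrow> x \<in> Theta \<Longrightarrow> y \<in> Theta \<Longrightarrow> x < y \<Longrightarrow> a x \<le> a y"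
    using assms(12) unfolding monotone_firm_def by (auto intro: less_imp_le)
  have ppos: "\<And>x. x \<in> Theta \<Longrightarrow> p x > 0" using assms(3) unfolding full_support_dist_def by auto
  have qJpos: "\<And>x. x \<in> Theta \<Longrightarrow> qJ x > 0" using assms(5) unfolding full_support_dist_def by auto
  have qIpos: "\<And>x. x \<in> Theta \<Longrightarrow> qI x > 0" using assms(4) unfolding full_support_dist_def by auto
  have piInn: "\<And>s x. s \<in> SI \<Longrightarrow> x \<in> Theta \<Longrightarrow> piI s x \<ge> 0" using assms(6) unfolding signal_structure_def by auto
  obtain g where g01: "\<forall>s\<in>SJ. \<forall>s'\<in>SI. 0 \<le> g s s' \<and> g s s' \<le> 1"
    and gsum: "\<forall>s'\<in>SI. (\<Sum>s\<in>SJ. g s s') = 1"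
    and gpi: "\<forall>s\<in>SJ. \<forall>\<theta>\<in>Theta. piJ s \<theta> = (\<Sum>s'\<in>SI. g s s' * piI s' \<theta>)"
    using assms(11) unfolding garbling_ge_def by blast
  define M where "M s' = (\<Sum>\<theta>\<in>Theta. qJ \<theta> * piI s' \<theta>)" for s'
  define P where "P s' = (\<Sum>\<theta>\<in>Theta. p \<theta> * piI s' \<theta>)" for s'
  define Y where "Y a s' = (\<Sum>\<theta>\<in>Theta. qJ \<theta> * piI s' \<theta> * a \<theta>)" for a :: "real \<Rightarrow> real" and s'
  define wI' where "wI' s' = wage Theta A s' qJ piI" for s'
  have Mpos: "\<And>s'. s' \<in> SI \<Longrightarrow> M s' > 0" unfolding M_def using denom_pos[OF fin assms(6) assms(5)] by blast
  have Pnn: "\<And>s'. s' \<in> SI \<Longrightarrow> P s' \<ge> 0" unfolding P_def using ppos piInn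
    by (intro sum_nonneg) (simp add: less_imp_le)
  have step1: "\<And>s'. s' \<in> SI \<Longrightarrow> wI' s' \<le> wage Theta A s' qI piI"
  proof -
    fix s' assume s': "s' \<in> SI"
    have D1: "(\<Sum>\<theta>\<in>Theta. qJ \<theta> * piI s' \<theta>) > 0" using denom_pos[OF fin assms(6) assms(5) s'] .
    have D2: "(\<Sum>\<theta>\<in>Theta. qI \<theta> * piI s' \<theta>) > 0" using denom_pos[OF fin assms(6) assms(4) s'] .
    show "wI' s' \<le> wage Theta A s' qI piI" unfolding wI'_def wage_eq
    proof (rule max_mono[OF finA neA])
      fix a assume a: "a \<in> A"
      have "(\<Sum>\<theta>\<in>Theta. qJ \<theta> * piI s' \<theta>) * (\<Sum>\<theta>\<in>Theta. qI \<theta> * piI s' \<theta> * a \<theta>)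
          \<ge> (\<Sum>\<theta>\<in>Theta. qI \<theta> * piI s' \<theta>) * (\<Sum>\<theta>\<in>Theta. qJ \<theta> * piI s' \<theta> * a \<theta>)"
      proof (rule LR_expect[OF fin])
        fix x y assume xy: "x \<in> Theta" "y \<in> Theta" "x < y"
        have "qJ x * qI y \<ge> qJ y * qI x" using assms(10) xy unfolding LR_ge_def by blast
        hence "(qJ x * qI y) * (piI s' x * piI s' y) \<ge> (qJ y * qI x) * (piI s' x * piI s' y)"
          using piInn[OF s' xy(1)] piInn[OF s' xy(2)] by (intro mult_right_mono) auto
        thus "qJ x * piI s' x * (qI y * piI s' y) \<ge> qJ y * piI s' y * (qI x * piI s' x)" by (simp add: mult_ac)
      next
        fix x y assume xy: "x \<in> Theta" "y \<in> Theta" "x < y"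
        thus "a x \<le> a y" using amono[OF a] by blast
      qed
      thus "(\<Sum>\<theta>\<in>Theta. qJ \<theta> * piI s' \<theta> * a \<theta>) / (\<Sum>\<theta>\<in>Theta. qJ \<theta> * piI s' \<theta>)
          \<le> (\<Sum>\<theta>\<in>Theta. qI \<theta> * piI s' \<theta> * a \<theta>) / (\<Sum>\<theta>\<in>Theta. qI \<theta> * piI s' \<theta>)"
        using D1 D2 by (simp add: divide_simps mult.commute)
    qed
  qed
  have ratio_mono: "\<And>s1 s2 f. s1 \<in> SI \<Longrightarrow> s2 \<in> SI \<Longrightarrow> s1 < s2 \<Longrightarrow>
      (\<And>x y. x \<in> Theta \<Longrightarrow> y \<in> Theta \<Longrightarrow> x < y \<Longrightarrow> f x \<le> f y) \<Longrightarrow>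
      (\<Sum>\<theta>\<in>Theta. qJ \<theta> * piI s1 \<theta> * f \<theta>) / M s1 \<le> (\<Sum>\<theta>\<in>Theta. qJ \<theta> * piI s2 \<theta> * f \<theta>) / M s2"
  proof -
    fix s1 s2 and f :: "real \<Rightarrow> real"
    assume s: "s1 \<in> SI" "s2 \<in> SI" "s1 < s2" and fm: "\<And>x y. x \<in> Theta \<Longrightarrow> y \<in> Theta \<Longrightarrow> x < y \<Longrightarrow> f x \<le> f y"
    have "(\<Sum>\<theta>\<in>Theta. qJ \<theta> * piI s1 \<theta>) * (\<Sum>\<theta>\<in>Theta. qJ \<theta> * piI s2 \<theta> * f \<theta>)
          \<ge> (\<Sum>\<theta>\<in>Theta. qJ \<theta> * piI s2 \<theta>) * (\<Sum>\<theta>\<in>Theta. qJ \<theta> * piI s1 \<theta> * f \<theta>)"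
    proof (rule LR_expect[OF fin])
      fix x y assume xy: "x \<in> Theta" "y \<in> Theta" "x < y"
      have "piI s1 x * piI s2 y \<ge> piI s1 y * piI s2 x" using assms(8) xy s unfolding MLR_def by blast
      hence "(piI s1 x * piI s2 y) * (qJ x * qJ y) \<ge> (piI s1 y * piI s2 x) * (qJ x * qJ y)"
        using qJpos[OF xy(1)] qJpos[OF xy(2)] by (intro mult_right_mono) auto
      thus "qJ x * piI s1 x * (qJ y * piI s2 y) \<ge> qJ y * piI s1 y * (qJ x * piI s2 x)" by (simp add: mult_ac)
    next
      fix x y assume "x \<in> Theta" "y \<in> Theta" "x < y"
      thus "f x \<le> f y" by (rule fm)
    qed
    thus "(\<Sum>\<theta>\<in>Theta. qJ \<theta> * piI s1 \<theta> * f \<theta>) / M s1 \<le> (\<Sum>\<theta>\<in>Theta. qJ \<theta> * piI s2 \<theta> * f \<theta>) / M s2"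
      using Mpos[OF s(1)] Mpos[OF s(2)] unfolding M_def by (simp add: divide_simps mult.commute)
  qed
  have PY: "\<And>s'. (\<Sum>\<theta>\<in>Theta. qJ \<theta> * piI s' \<theta> * (p \<theta> / qJ \<theta>)) = P s'"
    unfolding P_def
  proof (intro sum.cong refl)
    fix s' x assume "x \<in> Theta"
    hence "qJ x \<noteq> 0" using qJpos by (metis less_irrefl)
    thus "qJ x * piI s' x * (p x / qJ x) = p x * piI s' x" by (simp add: field_simps)
  qed
  have xmono: "\<And>s1 s2. s1 \<in> SI \<Longrightarrow> s2 \<in> SI \<Longrightarrow> s1 < s2 \<Longrightarrow> P s1 / M s1 \<le> P s2 / M s2"
  proof -
    fix s1 s2 assume s: "s1 \<in> SI" "s2 \<in> SI" "s1 < s2"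
    have "(\<Sum>\<theta>\<in>Theta. qJ \<theta> * piI s1 \<theta> * (p \<theta> / qJ \<theta>)) / M s1 \<le> (\<Sum>\<theta>\<in>Theta. qJ \<theta> * piI s2 \<theta> * (p \<theta> / qJ \<theta>)) / M s2"
    proof (rule ratio_mono[OF s])
      fix x y assume xy: "x \<in> Theta" "y \<in> Theta" "x < y"
      have "qJ x * p y \<ge> qJ y * p x" using assms(9) xy unfolding LR_ge_def by blast
      thus "p x / qJ x \<le> p y / qJ y" using qJpos[OF xy(1)] qJpos[OF xy(2)] by (simp add: divide_simps mult.commute)
    qed
    thus "P s1 / M s1 \<le> P s2 / M s2" by (simp only: PY)
  qed
  have ymono: "\<And>a s1 s2. a \<in> A \<Longrightarrow> s1 \<in> SI \<Longrightarrow> s2 \<in> SI \<Longrightarrow> s1 < s2 \<Longrightarrow> Y a s1 / M s1 \<le> Y a s2 / M s2"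
    unfolding Y_def using ratio_mono amono by blast
  have wI'ge: "\<And>a s'. a \<in> A \<Longrightarrow> Y a s' / M s' \<le> wI' s'"
    unfolding wI'_def wage_eq Y_def M_def using finA by (intro Max_ge) auto
  have key: "\<And>s. s \<in> SJ \<Longrightarrow> (\<Sum>\<theta>\<in>Theta. p \<theta> * piJ s \<theta>) * wage Theta A s qJ piJ \<le> (\<Sum>s'\<in>SI. g s s' * P s' * wI' s')"
  proof -
    fix s assume s: "s \<in> SJ"
    have gnn: "\<And>s'. s' \<in> SI \<Longrightarrow> g s s' \<ge> 0" using g01 s by blast
    have gp: "\<And>\<theta>. \<theta> \<in> Theta \<Longrightarrow> piJ s \<theta> = (\<Sum>s'\<in>SI. g s s' * piI s' \<theta>)" using gpi s by blast
    have N: "(\<Sum>\<theta>\<in>Theta. qJ \<theta> * piJ s \<theta>) = (\<Sum>s'\<in>SI. g s s' * M s')"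
      unfolding M_def by (rule garb_sum[OF fin finI gp])
    have PJ: "(\<Sum>\<theta>\<in>Theta. p \<theta> * piJ s \<theta>) = (\<Sum>s'\<in>SI. g s s' * P s')"
      unfolding P_def by (rule garb_sum[OF fin finI gp])
    have Npos: "(\<Sum>\<theta>\<in>Theta. qJ \<theta> * piJ s \<theta>) > 0" by (rule denom_pos[OF fin assms(7) assms(5) s])
    have "wage Theta A s qJ piJ \<in> (\<lambda>a. (\<Sum>\<theta>\<in>Theta. qJ \<theta> * piJ s \<theta> * a \<theta>) / (\<Sum>\<theta>\<in>Theta. qJ \<theta> * piJ s \<theta>)) ` A"
      unfolding wage_eq using finA neA by (intro Max_in) auto
    then obtain a where a: "a \<in> A" "wage Theta A s qJ piJ = (\<Sum>\<theta>\<in>Theta. qJ \<theta> * piJ s \<theta> * a \<theta>) / (\<Sum>\<theta>\<in>Theta. qJ \<theta> * piJ s \<theta>)"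
      by auto
    have "(\<Sum>\<theta>\<in>Theta. (qJ \<theta> * a \<theta>) * piJ s \<theta>) = (\<Sum>s'\<in>SI. g s s' * (\<Sum>\<theta>\<in>Theta. (qJ \<theta> * a \<theta>) * piI s' \<theta>))"
      by (rule garb_sum[OF fin finI gp])
    hence YJ: "(\<Sum>\<theta>\<in>Theta. qJ \<theta> * piJ s \<theta> * a \<theta>) = (\<Sum>s'\<in>SI. g s s' * Y a s')"
      unfolding Y_def by (simp add: mult_ac)
    define Sxy where "Sxy = (\<Sum>s'\<in>SI. g s s' * P s' * (Y a s' / M s'))"
    have c: "(\<Sum>s'\<in>SI. g s s' * M s') * (\<Sum>s'\<in>SI. g s s' * M s' * (P s' / M s') * (Y a s' / M s'))
      \<ge> (\<Sum>s'\<in>SI. g s s' * M s' * (P s' / M s')) * (\<Sum>s'\<in>SI. g s s' * M s' * (Y a s' / M s'))"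
    proof (rule cheb[OF finI])
      fix i assume "i \<in> SI" thus "0 \<le> g s i * M i" using gnn Mpos by (simp add: less_imp_le)
    next
      fix i j assume "i \<in> SI" "j \<in> SI" "i < j" thus "P i / M i \<le> P j / M j" by (rule xmono)
    next
      fix i j assume "i \<in> SI" "j \<in> SI" "i < j" thus "Y a i / M i \<le> Y a j / M j" by (rule ymono[OF a(1)])
    qed
    have e1: "(\<Sum>s'\<in>SI. g s s' * M s' * (P s' / M s')) = (\<Sum>s'\<in>SI. g s s' * P s')"
      using Mpos by (intro sum.cong refl) (simp add: less_imp_neq[symmetric])
    have e2: "(\<Sum>s'\<in>SI. g s s' * M s' * (Y a s' / M s')) = (\<Sum>s'\<in>SI. g s s' * Y a s')"
      using Mpos by (intro sum.cong refl) (simp add: less_imp_neq[symmetric])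
    have e3: "(\<Sum>s'\<in>SI. g s s' * M s' * (P s' / M s') * (Y a s' / M s')) = Sxy"
      unfolding Sxy_def using Mpos by (intro sum.cong refl) (simp add: less_imp_neq[symmetric])
    have c2: "(\<Sum>\<theta>\<in>Theta. qJ \<theta> * piJ s \<theta>) * Sxy \<ge> (\<Sum>\<theta>\<in>Theta. p \<theta> * piJ s \<theta>) * (\<Sum>\<theta>\<in>Theta. qJ \<theta> * piJ s \<theta> * a \<theta>)"
      using c unfolding e1 e2 e3 N PJ YJ .
    have "(\<Sum>\<theta>\<in>Theta. p \<theta> * piJ s \<theta>) * wage Theta A s qJ piJ \<le> Sxy"
      unfolding a(2) using c2 Npos by (simp add: divide_simps mult.commute)
    also have "Sxy \<le> (\<Sum>s'\<in>SI. g s s' * P s' * wI' s')"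
      unfolding Sxy_def using gnn Pnn wI'ge[OF a(1)] by (intro sum_mono mult_left_mono) auto
    finally show "(\<Sum>\<theta>\<in>Theta. p \<theta> * piJ s \<theta>) * wage Theta A s qJ piJ \<le> (\<Sum>s'\<in>SI. g s s' * P s' * wI' s')" .
  qed
  have "total_wage Theta A p qJ SJ piJ = (\<Sum>s\<in>SJ. (\<Sum>\<theta>\<in>Theta. p \<theta> * piJ s \<theta>) * wage Theta A s qJ piJ)"
    by (rule total_wage_eq[OF fin finJ])
  also have "... \<le> (\<Sum>s\<in>SJ. \<Sum>s'\<in>SI. g s s' * P s' * wI' s')" using key by (rule sum_mono)
  also have "... = (\<Sum>s'\<in>SI. \<Sum>s\<in>SJ. g s s' * P s' * wI' s')" by (rule sum.swap)
  also have "... = (\<Sum>s'\<in>SI. (\<Sum>s\<in>SJ. g s s') * (P s' * wI' s'))" by (simp add: sum_distrib_right mult.assoc)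
  also have "... = (\<Sum>s'\<in>SI. P s' * wI' s')" using gsum by simp
  also have "... \<le> (\<Sum>s'\<in>SI. P s' * wage Theta A s' qI piI)"
    using step1 Pnn by (intro sum_mono mult_left_mono) auto
  also have "... = total_wage Theta A p qI SI piI"
    unfolding P_def by (rule total_wage_eq[OF fin finI, symmetric])
  finally show ?thesis .
qed

end
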